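(* Let $X_1,X_2,\dots$ be i.i.d. non-negative random variables with mean $\mu<\infty$ and continuous distribution function $F$. Let $(\Phi_n)_n$ be integer-valued random variables with $\Phi_n\to\infty$ a.s., and $(\Psi_n)_n$ real random variables with $\Psi_n\to\infty$ a.s., such that $\Psi_n/\Phi_n\to\rho$ a.s. for some constant $0<\rho\le\mu$. Let $\tau$ be a solution of $\int_0^\tau x\,\mathrm dF(x)=\rho$. Then $$\frac{N(\Phi_n,(X_k)_{k=1}^{\Phi_n},\Psi_n)}{\Phi_n}\to F(\tau)\quad\text{a.s.}$$ If moreover the $X_k$ are bounded, $b$ is the supremum of the support of $F$, and $\theta$ is a solution of $\int_\theta^bx\,\mathrm dF(x)=\rho$, then $$\frac{M(\Phi_n,(X_k)_{k=1}^{\Phi_n},\Psi_n)}{\Phi_n}\to1-F(\theta)\quad\text{a.s.}$$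
   Context: For $(x_k)_{k=1}^t$ let $x_{1,t}\le\dots\le x_{t,t}$ be its order statistics. Weakest-first counting function: $N(0,\varnothing,s)=0$ and, for $t\ge1$, $N(t,(x_k)_{k=1}^t,s)=0$ if $x_{1,t}>s$, otherwise $\max\{1\le k\le t:\sum_{j=1}^kx_{j,t}\le s\}$. Strongest-first counting function: $M(0,\varnothing,s)=0$ and, for $t\ge1$, $M(t,(x_k)_{k=1}^t,s)=0$ if $x_{t,t}>s$, otherwise $\max\{1\le k\le t:\sum_{j=t-k+1}^tx_{j,t}\le s\}$. *)

theory Defs
  imports "HOL-Probability.Probability"
begin

text \<open>Order statistics of x 1, ..., x t: the j-th smallest value x_{j,t} is
  order_stats t x ! (j - 1), for 1 <= j <= t.\<close>
definition order_stats :: "nat \<Rightarrow> (nat \<Rightarrow> real) \<Rightarrow> real list" where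
  "order_stats t x = sort (map x [1..<Suc t])"

definition weakest_count :: "nat \<Rightarrow> (nat \<Rightarrow> real) \<Rightarrow> real \<Rightarrow> nat" where
  "weakest_count t x s =
     (if t = 0 then 0
      else if order_stats t x ! 0 > s then 0
      else Max {k. 1 \<le> k \<and> k \<le> t \<and> (\<Sum>j=1..k. order_stats t x ! (j - 1)) \<le> s})"

definition strongest_count :: "nat \<Rightarrow> (nat \<Rightarrow> real) \<Rightarrow> real \<Rightarrow> nat" where
  "strongest_count t x s =
     (if t = 0 then 0
      else if order_stats t x ! (t - 1) > s then 0
      else Max {k. 1 \<le> k \<and> k \<le> t \<and> (\<Sum>j=t-k+1..t. order_stats t x ! (j - 1)) \<le> s})"

end

theory Submission
  imports Defs
begin

lemma tendsto_from_inv: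
  fixes f :: "nat \<Rightarrow> real"
  assumes "\<And>m. eventually (\<lambda>n. \<bar>f n - L\<bar> < 1 / real (Suc m)) sequentially"
  shows "f \<longlonglongrightarrow> L"
proof (rule tendstoI)
  fix e :: real assume "e > 0"
  then obtain m where m: "inverse (real (Suc m)) < e" using reals_Archimedean by blast
  show "eventually (\<lambda>n. dist (f n) L < e) sequentially"
    using assms[of m] by (rule eventually_mono) (use m in \<open>auto simp: dist_real_def inverse_eq_divide\<close>)
qed

lemma slln_bounded:
  fixes M :: "'a measure" and X :: "nat \<Rightarrow> 'a \<Rightarrow> real" and g :: "real \<Rightarrow> real"
  assumes P: "prob_space M"
    and X_indep: "prob_space.indep_vars M (\<lambda>_. borel) X {1..}"
    and X_ident: "\<And>i. i \<ge> 1 \<Longrightarrow> distr M borel (X i) = distr M borel (X 1)"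
    and g_meas: "g \<in> borel_measurable borel"
    and g_bd: "\<And>x. g x \<in> {a..b}" and ab: "a < b"
  shows "AE \<omega> in M. (\<lambda>t. (\<Sum>k=1..t. g (X k \<omega>)) / real t) \<longlonglongrightarrow> (\<integral>x. g x \<partial>distr M borel (X 1))"
proof -
  interpret prob_space M by (rule P)
  have Xrv[measurable]: "X i \<in> borel_measurable M" if "i \<ge> 1" for i
    using X_indep that unfolding indep_vars_def2 by auto
  define Y where "Y = (\<lambda>i \<omega>. g (X i \<omega>))"
  have Yrv[measurable]: "Y i \<in> borel_measurable M" if "i \<ge> 1" for i
    unfolding Y_def using Xrv[OF that] g_meas by measurable
  have mu: "(\<integral>x. g x \<partial>distr M borel (X 1)) = expectation (Y 1)"
    unfolding Y_def by (rule integral_distr) (use Xrv g_meas in auto)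
  define \<mu> where "\<mu> = expectation (Y 1)"
  have bnd: "prob {\<omega>\<in>space M. \<bar>(\<Sum>i\<in>{1..Suc n}. Y i \<omega>) / real (Suc n) - \<mu>\<bar> \<ge> \<epsilon>}
     \<le> 2 * exp (-2 * real (Suc n) * \<epsilon>\<^sup>2 / (b - a)\<^sup>2)" if "\<epsilon> \<ge> 0" for n \<epsilon>
  proof -
    interpret H: Hoeffding_ineq_iid M "{1..Suc n}" Y "Y 1" a b \<mu>
    proof unfold_locales
      show "indep_vars (\<lambda>_. borel) Y {1..Suc n}"
        unfolding Y_def
        by (rule indep_vars_compose2[where X=X], rule indep_vars_subset[OF X_indep]) (use g_meas in auto)
      show "distr M borel (Y i) = distr M borel (Y 1)" if "i \<in> {1..Suc n}" for i
      proof -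
        have "distr M borel (Y i) = distr (distr M borel (X i)) borel g"
          unfolding Y_def using that Xrv g_meas by (subst distr_distr) (auto simp: comp_def)
        also have "\<dots> = distr (distr M borel (X 1)) borel g" using X_ident[of i] that by simp
        also have "\<dots> = distr M borel (Y 1)"
          unfolding Y_def using Xrv g_meas by (subst distr_distr) (auto simp: comp_def)
        finally show ?thesis .
      qed
      show "AE x in M. Y 1 x \<in> {a..b}" unfolding Y_def using g_bd by auto
    qed (simp, rule Yrv, simp, unfold \<mu>_def, rule reflexive)
    have c: "card {1..Suc n} = Suc n" by simp
    have ne: "{1..Suc n} \<noteq> {}" by simp
    show ?thesis using H.Hoeffding_ineq_abs_ge'[OF that ab ne] unfolding c .
  qed
  have ev: "AE \<omega> in M. eventually (\<lambda>n. \<bar>(\<Sum>i\<in>{1..Suc n}. Y i \<omega>) / real (Suc n) - \<mu>\<bar> < 1 / real (Suc m)) sequentially" for m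
  proof -
    define \<epsilon> where "\<epsilon> = 1 / real (Suc m)"
    have e0: "\<epsilon> > 0" unfolding \<epsilon>_def by simp
    define A where "A n = {\<omega>\<in>space M. \<bar>(\<Sum>i\<in>{1..Suc n}. Y i \<omega>) / real (Suc n) - \<mu>\<bar> \<ge> \<epsilon>}" for n
    have Am[measurable]: "A n \<in> sets M" for n
    proof -
      have "(\<lambda>\<omega>. (\<Sum>i\<in>{1..Suc n}. Y i \<omega>)) \<in> borel_measurable M"
        by (rule borel_measurable_sum) (auto intro: Yrv)
      then show ?thesis unfolding A_def by measurable
    qed
    define q where "q = exp (-2 * \<epsilon>\<^sup>2 / (b - a)\<^sup>2)"
    have q: "0 \<le> q" "q < 1" unfolding q_def using e0 ab by auto
    have sm: "summable (\<lambda>n. measure M (A n))"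
    proof (rule summable_comparison_test[where g="\<lambda>n. 2 * q ^ Suc n"])
      show "summable (\<lambda>n. 2 * q ^ Suc n)"
        using q by (intro summable_mult summable_ignore_initial_segment[where k=1, simplified]
            summable_geometric) auto
      show "\<exists>N. \<forall>n\<ge>N. norm (measure M (A n)) \<le> 2 * q ^ Suc n"
      proof (intro exI allI impI)
        fix n
        have "exp (-2 * real (Suc n) * \<epsilon>\<^sup>2 / (b - a)\<^sup>2) = q ^ Suc n"
        proof -
          have "-2 * real (Suc n) * \<epsilon>\<^sup>2 / (b - a)\<^sup>2 = real (Suc n) * (-2 * \<epsilon>\<^sup>2 / (b - a)\<^sup>2)"
            by algebra
          then show ?thesis unfolding q_def by (simp only: exp_of_nat_mult)
        qed
        then show "norm (measure M (A n)) \<le> 2 * q ^ Suc n"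
          using bnd[of \<epsilon> n] e0 unfolding A_def by simp
      qed
    qed
    have "AE \<omega> in M. eventually (\<lambda>n. \<omega> \<in> space M - A n) sequentially"
      by (rule borel_cantelli_AE1) (auto simp: sm less_top[symmetric])
    then show ?thesis
      by (rule AE_mp) (auto intro!: AE_I2 elim!: eventually_mono simp: A_def \<epsilon>_def)
  qed
  have "AE \<omega> in M. \<forall>m. eventually (\<lambda>n. \<bar>(\<Sum>i\<in>{1..Suc n}. Y i \<omega>) / real (Suc n) - \<mu>\<bar> < 1 / real (Suc m)) sequentially"
    using ev by (subst AE_all_countable) auto
  then show ?thesis
  proof (rule AE_mp, intro AE_I2 impI)
    fix \<omega> assume "\<forall>m. eventually (\<lambda>n. \<bar>(\<Sum>i\<in>{1..Suc n}. Y i \<omega>) / real (Suc n) - \<mu>\<bar> < 1 / real (Suc m)) sequentially"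
    then have "(\<lambda>n. (\<Sum>i\<in>{1..Suc n}. Y i \<omega>) / real (Suc n)) \<longlonglongrightarrow> \<mu>"
      by (intro tendsto_from_inv) auto
    then have "(\<lambda>t. (\<Sum>i\<in>{1..t}. Y i \<omega>) / real t) \<longlonglongrightarrow> \<mu>"
      by (rule LIMSEQ_imp_Suc)
    then show "(\<lambda>t. (\<Sum>k=1..t. g (X k \<omega>)) / real t) \<longlonglongrightarrow> (\<integral>x. g x \<partial>distr M borel (X 1))"
      unfolding mu \<mu>_def Y_def .
  qed
qed


lemma os_len[simp]: "length (order_stats t x) = t"
  by (simp add: order_stats_def)

lemma os_set: "set (order_stats t x) = x ` {1..t}"
  by (auto simp: order_stats_def)

lemma os_sorted: "sorted (order_stats t x)"
  by (simp add: order_stats_def)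

lemma sum_list_sort: "sum_list (sort (xs::real list)) = sum_list xs"
  by (metis mset_sort sum_mset_sum_list)

lemma os_filter_len: "length (filter P (order_stats t x)) = length (filter P (map x [1..<Suc t]))"
  by (simp add: order_stats_def filter_sort)

lemma os_filter_sum: "sum_list (filter P (order_stats t x)) = sum_list (filter P (map x [1..<Suc t]))"
  by (simp add: order_stats_def filter_sort sum_list_sort)

lemma take_filter_sorted: "sorted (xs::real list) \<Longrightarrow> take (length (filter (\<lambda>v. v \<le> c) xs)) xs = filter (\<lambda>v. v \<le> c) xs"
proof (induction xs)
  case Nil then show ?case by simp
next
  case (Cons a xs)
  show ?case
  proof (cases "a \<le> c")
    case True then show ?thesis using Cons by simp
  next
    case False
    then have "filter (\<lambda>v. v \<le> c) (a # xs) = []" using Cons.prems by (auto simp: filter_empty_conv)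
    then show ?thesis by simp
  qed
qed

lemma drop_filter_sorted: "sorted (xs::real list) \<Longrightarrow> drop (length xs - length (filter (\<lambda>v. c < v) xs)) xs = filter (\<lambda>v. c < v) xs"
proof (induction xs)
  case Nil then show ?case by simp
next
  case (Cons a xs)
  show ?case
  proof (cases "c < a")
    case True
    then have "filter (\<lambda>v. c < v) (a # xs) = a # xs" using Cons.prems by (auto simp: filter_id_conv)
    then show ?thesis by simp
  next
    case False
    have le: "length (filter (\<lambda>v. c < v) xs) \<le> length xs" by (rule length_filter_le)
    then have "length (a # xs) - length (filter (\<lambda>v. c < v) (a # xs)) = Suc (length xs - length (filter (\<lambda>v. c < v) xs))"
      using False le by (simp add: Suc_diff_le)
    then show ?thesis using Cons False by simp
  qed
qed

lemma psum_take: "k \<le> length xs \<Longrightarrow> (\<Sum>j=1..k. xs!(j-1)) = sum_list (take k (xs::real list))"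
proof (induction k)
  case 0 then show ?case by simp
next
  case (Suc k)
  then show ?case by (simp add: take_Suc_conv_app_nth)
qed

lemma qsum_drop: "k \<le> length xs \<Longrightarrow> (\<Sum>j=length xs-k+1..length xs. xs!(j-1)) = sum_list (drop (length xs - k) (xs::real list))"
proof (induction k)
  case 0 then show ?case by simp
next
  case (Suc k)
  define t where "t = length xs"
  have k: "Suc k \<le> t" using Suc t_def by simp
  have iv: "{t - Suc k + 1..t} = insert (t - k) {t - k + 1..t}" using k by auto
  have "(\<Sum>j=t-Suc k+1..t. xs!(j-1)) = xs!(t-k-1) + (\<Sum>j=t-k+1..t. xs!(j-1))"
    unfolding iv by (subst sum.insert) auto
  also have "\<dots> = xs!(t - Suc k) + sum_list (drop (t - k) xs)"
  proof -
    have kk: "k \<le> length xs" using k t_def by simp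
    have e1: "t - k - 1 = t - Suc k" by (simp only: diff_diff_left)
    show ?thesis using Suc.IH[OF kk, folded t_def] e1 by simp
  qed
  also have "\<dots> = sum_list (drop (t - Suc k) xs)"
  proof -
    have "drop (t - Suc k) xs = xs!(t - Suc k) # drop (Suc (t - Suc k)) xs"
      using k t_def by (intro Cons_nth_drop_Suc[symmetric]) auto
    moreover have "Suc (t - Suc k) = t - k" using k by simp
    ultimately show ?thesis by simp
  qed
  finally show ?case unfolding t_def .
qed

lemma os_nonneg: "\<forall>k\<in>{1..t}. 0 \<le> x k \<Longrightarrow> i < t \<Longrightarrow> 0 \<le> order_stats t x ! i"
  using nth_mem[of i "order_stats t x"] os_set[of t x] by auto

lemma weakest_ge:
  assumes t: "t \<ge> 1" and nn: "\<forall>k\<in>{1..t}. 0 \<le> x k"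
    and S: "sum_list (filter (\<lambda>v. v \<le> c) (map x [1..<Suc t])) \<le> s"
  shows "length (filter (\<lambda>v. v \<le> c) (map x [1..<Suc t])) \<le> weakest_count t x s"
proof -
  define xs where "xs = order_stats t x"
  define C where "C = length (filter (\<lambda>v. v \<le> c) xs)"
  have C': "C = length (filter (\<lambda>v. v \<le> c) (map x [1..<Suc t]))"
    unfolding C_def xs_def by (rule os_filter_len)
  have Ct: "C \<le> t" unfolding C_def xs_def using length_filter_le[of _ "order_stats t x"] by simp
  have pC: "(\<Sum>j=1..C. xs!(j-1)) \<le> s"
  proof -
    have "(\<Sum>j=1..C. xs!(j-1)) = sum_list (take C xs)" using Ct by (intro psum_take) (simp add: xs_def)
    also have "\<dots> = sum_list (filter (\<lambda>v. v \<le> c) xs)"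
      unfolding C_def using take_filter_sorted[OF os_sorted] xs_def by simp
    also have "\<dots> \<le> s" using S unfolding xs_def os_filter_sum .
    finally show ?thesis .
  qed
  show ?thesis
  proof (cases "C = 0")
    case True then show ?thesis using C' by simp
  next
    case False
    have "(\<Sum>j=1..1. xs!(j-1)) \<le> (\<Sum>j=1..C. xs!(j-1))"
      using False Ct by (intro sum_mono2) (auto intro!: os_nonneg[OF nn] simp: xs_def)
    then have g: "\<not> xs ! 0 > s" using pC by simp
    have fin: "finite {k. 1 \<le> k \<and> k \<le> t \<and> (\<Sum>j=1..k. order_stats t x ! (j - 1)) \<le> s}" by simp
    have "C \<le> Max {k. 1 \<le> k \<and> k \<le> t \<and> (\<Sum>j=1..k. order_stats t x ! (j - 1)) \<le> s}"
      using False Ct pC by (intro Max_ge[OF fin]) (auto simp: xs_def)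
    then show ?thesis using g t C' unfolding weakest_count_def xs_def by simp
  qed
qed

lemma weakest_le:
  assumes nn: "\<forall>k\<in>{1..t}. 0 \<le> x k"
    and S: "s < sum_list (filter (\<lambda>v. v \<le> c) (map x [1..<Suc t]))"
  shows "weakest_count t x s \<le> length (filter (\<lambda>v. v \<le> c) (map x [1..<Suc t]))"
proof -
  define xs where "xs = order_stats t x"
  define C where "C = length (filter (\<lambda>v. v \<le> c) xs)"
  have C': "C = length (filter (\<lambda>v. v \<le> c) (map x [1..<Suc t]))"
    unfolding C_def xs_def by (rule os_filter_len)
  have Ct: "C \<le> t" unfolding C_def xs_def using length_filter_le[of _ "order_stats t x"] by simp
  have pC: "s < (\<Sum>j=1..C. xs!(j-1))"
  proof -
    have "(\<Sum>j=1..C. xs!(j-1)) = sum_list (take C xs)" using Ct by (intro psum_take) (simp add: xs_def)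
    also have "\<dots> = sum_list (filter (\<lambda>v. v \<le> c) xs)"
      unfolding C_def using take_filter_sorted[OF os_sorted] xs_def by simp
    finally show ?thesis using S unfolding xs_def os_filter_sum by simp
  qed
  define K where "K = {k. 1 \<le> k \<and> k \<le> t \<and> (\<Sum>j=1..k. order_stats t x ! (j - 1)) \<le> s}"
  show ?thesis
  proof (cases "t = 0 \<or> order_stats t x ! 0 > s")
    case True then show ?thesis unfolding weakest_count_def by auto
  next
    case False
    then have t: "t \<ge> 1" and g: "order_stats t x ! 0 \<le> s" by auto
    have "1 \<in> K" using t g unfolding K_def by simp
    moreover have fin: "finite K" unfolding K_def by simp
    ultimately have "Max K \<in> K" using Max_in by blast
    then obtain k where k: "k = Max K" "1 \<le> k" "k \<le> t" "(\<Sum>j=1..k. xs ! (j - 1)) \<le> s"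
      unfolding K_def xs_def by auto
    have "k \<le> C"
    proof (rule ccontr)
      assume "\<not> k \<le> C"
      then have "(\<Sum>j=1..C. xs!(j-1)) \<le> (\<Sum>j=1..k. xs!(j-1))"
        using k by (intro sum_mono2) (auto intro!: os_nonneg[OF nn] simp: xs_def)
      then show False using pC k by simp
    qed
    then show ?thesis using False k C' unfolding weakest_count_def K_def by simp
  qed
qed

lemma strongest_ge:
  assumes t: "t \<ge> 1" and nn: "\<forall>k\<in>{1..t}. 0 \<le> x k"
    and S: "sum_list (filter (\<lambda>v. c < v) (map x [1..<Suc t])) \<le> s"
  shows "length (filter (\<lambda>v. c < v) (map x [1..<Suc t])) \<le> strongest_count t x s"
proof -
  define xs where "xs = order_stats t x"
  define C where "C = length (filter (\<lambda>v. c < v) xs)"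
  have C': "C = length (filter (\<lambda>v. c < v) (map x [1..<Suc t]))"
    unfolding C_def xs_def by (rule os_filter_len)
  have Ct: "C \<le> t" unfolding C_def xs_def using length_filter_le[of _ "order_stats t x"] by simp
  have pC: "(\<Sum>j=t-C+1..t. xs!(j-1)) \<le> s"
  proof -
    have "(\<Sum>j=t-C+1..t. xs!(j-1)) = sum_list (drop (t - C) xs)"
      using Ct qsum_drop[of C xs] by (simp add: xs_def)
    also have "\<dots> = sum_list (filter (\<lambda>v. c < v) xs)"
      unfolding C_def using drop_filter_sorted[OF os_sorted] xs_def by simp
    also have "\<dots> \<le> s" using S unfolding xs_def os_filter_sum .
    finally show ?thesis .
  qed
  show ?thesis
  proof (cases "C = 0")
    case True then show ?thesis using C' by simp
  next
    case False
    have "(\<Sum>j=t-1+1..t. xs!(j-1)) \<le> (\<Sum>j=t-C+1..t. xs!(j-1))"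
      using False Ct by (intro sum_mono2) (auto intro!: os_nonneg[OF nn] simp: xs_def)
    then have g: "\<not> xs ! (t - 1) > s" using pC t by simp
    have fin: "finite {k. 1 \<le> k \<and> k \<le> t \<and> (\<Sum>j=t-k+1..t. order_stats t x ! (j - 1)) \<le> s}" by simp
    have "C \<le> Max {k. 1 \<le> k \<and> k \<le> t \<and> (\<Sum>j=t-k+1..t. order_stats t x ! (j - 1)) \<le> s}"
      using False Ct pC by (intro Max_ge[OF fin]) (auto simp: xs_def)
    then show ?thesis using g t C' unfolding strongest_count_def xs_def by simp
  qed
qed

lemma strongest_le:
  assumes nn: "\<forall>k\<in>{1..t}. 0 \<le> x k"
    and S: "s < sum_list (filter (\<lambda>v. c < v) (map x [1..<Suc t]))"
  shows "strongest_count t x s \<le> length (filter (\<lambda>v. c < v) (map x [1..<Suc t]))"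
proof -
  define xs where "xs = order_stats t x"
  define C where "C = length (filter (\<lambda>v. c < v) xs)"
  have C': "C = length (filter (\<lambda>v. c < v) (map x [1..<Suc t]))"
    unfolding C_def xs_def by (rule os_filter_len)
  have Ct: "C \<le> t" unfolding C_def xs_def using length_filter_le[of _ "order_stats t x"] by simp
  have pC: "s < (\<Sum>j=t-C+1..t. xs!(j-1))"
  proof -
    have "(\<Sum>j=t-C+1..t. xs!(j-1)) = sum_list (drop (t - C) xs)"
      using Ct qsum_drop[of C xs] by (simp add: xs_def)
    also have "\<dots> = sum_list (filter (\<lambda>v. c < v) xs)"
      unfolding C_def using drop_filter_sorted[OF os_sorted] xs_def by simp
    finally show ?thesis using S unfolding xs_def os_filter_sum by simp
  qed
  define K where "K = {k. 1 \<le> k \<and> k \<le> t \<and> (\<Sum>j=t-k+1..t. order_stats t x ! (j - 1)) \<le> s}"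
  show ?thesis
  proof (cases "t = 0 \<or> order_stats t x ! (t - 1) > s")
    case True then show ?thesis unfolding strongest_count_def by auto
  next
    case False
    then have t: "t \<ge> 1" and g: "order_stats t x ! (t - 1) \<le> s" by auto
    have "1 \<in> K" using t g unfolding K_def by simp
    moreover have fin: "finite K" unfolding K_def by simp
    ultimately have "Max K \<in> K" using Max_in by blast
    then obtain k where k: "k = Max K" "1 \<le> k" "k \<le> t" "(\<Sum>j=t-k+1..t. xs ! (j - 1)) \<le> s"
      unfolding K_def xs_def by auto
    have "k \<le> C"
    proof (rule ccontr)
      assume "\<not> k \<le> C"
      then have "(\<Sum>j=t-C+1..t. xs!(j-1)) \<le> (\<Sum>j=t-k+1..t. xs!(j-1))"
        using k by (intro sum_mono2) (auto intro!: os_nonneg[OF nn] simp: xs_def)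
      then show False using pC k by simp
    qed
    then show ?thesis using False k C' unfolding strongest_count_def K_def by simp
  qed
qed

lemma filter_sum_eq: "sum_list (filter P (map x [1..<Suc t])) = (\<Sum>k=1..t. if P (x k) then x k else (0::real))"
  by (induction t) auto

lemma filter_len_eq: "real (length (filter P (map x [1..<Suc t]))) = (\<Sum>k=1..t. if P (x k) then 1 else (0::real))"
  by (induction t) auto


lemma core_lower:
  fixes T N C :: "nat \<Rightarrow> nat" and s S :: "nat \<Rightarrow> real"
  assumes T: "filterlim T at_top sequentially"
    and r: "(\<lambda>n. s n / real (T n)) \<longlonglongrightarrow> \<rho>"
    and c: "(\<lambda>n. real (C n) / real (T n)) \<longlonglongrightarrow> p"
    and sm: "(\<lambda>n. S n / real (T n)) \<longlonglongrightarrow> g" and g: "g < \<rho>"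
    and comb: "\<And>n. T n \<ge> 1 \<Longrightarrow> S n \<le> s n \<Longrightarrow> C n \<le> N n"
    and e: "\<epsilon> > 0"
  shows "eventually (\<lambda>n. p - \<epsilon> < real (N n) / real (T n)) sequentially"
proof -
  define r' where "r' = (g + \<rho>) / 2"
  have e1: "eventually (\<lambda>n. T n \<ge> 1) sequentially" using T by (simp add: filterlim_at_top)
  have gr: "g < r'" "r' < \<rho>" using g unfolding r'_def by simp_all
  have e2: "eventually (\<lambda>n. S n / T n < r') sequentially"
    using order_tendstoD(2)[OF sm gr(1)] .
  have e3: "eventually (\<lambda>n. r' < s n / T n) sequentially"
    using order_tendstoD(1)[OF r gr(2)] .
  have e4: "eventually (\<lambda>n. p - \<epsilon> < C n / T n) sequentially"
    using order_tendstoD(1)[OF c] e by simp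
  show ?thesis
    using e1 e2 e3 e4
  proof eventually_elim
    case (elim n)
    then have Tp: "real (T n) > 0" by simp
    have "S n / T n < s n / T n" using elim by simp
    then have "S n \<le> s n" using Tp by (simp add: divide_less_cancel)
    then have "C n \<le> N n" using comb elim by simp
    then have "real (C n) / T n \<le> real (N n) / T n" using Tp by (simp add: divide_right_mono)
    then show ?case using elim by simp
  qed
qed

lemma core_upper:
  fixes T N C :: "nat \<Rightarrow> nat" and s S :: "nat \<Rightarrow> real"
  assumes T: "filterlim T at_top sequentially"
    and r: "(\<lambda>n. s n / real (T n)) \<longlonglongrightarrow> \<rho>"
    and c: "(\<lambda>n. real (C n) / real (T n)) \<longlonglongrightarrow> p"
    and sm: "(\<lambda>n. S n / real (T n)) \<longlonglongrightarrow> g" and g: "\<rho> < g"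
    and comb: "\<And>n. s n < S n \<Longrightarrow> N n \<le> C n"
    and e: "\<epsilon> > 0"
  shows "eventually (\<lambda>n. real (N n) / real (T n) < p + \<epsilon>) sequentially"
proof -
  define r' where "r' = (g + \<rho>) / 2"
  have e1: "eventually (\<lambda>n. T n \<ge> 1) sequentially" using T by (simp add: filterlim_at_top)
  have gr: "r' < g" "\<rho> < r'" using g unfolding r'_def by simp_all
  have e2: "eventually (\<lambda>n. r' < S n / T n) sequentially"
    using order_tendstoD(1)[OF sm gr(1)] .
  have e3: "eventually (\<lambda>n. s n / T n < r') sequentially"
    using order_tendstoD(2)[OF r gr(2)] .
  have e4: "eventually (\<lambda>n. C n / T n < p + \<epsilon>) sequentially"
    using order_tendstoD(2)[OF c] e by simp
  show ?thesis
    using e1 e2 e3 e4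
  proof eventually_elim
    case (elim n)
    then have Tp: "real (T n) > 0" by simp
    have "s n / T n < S n / T n" using elim by simp
    then have "s n < S n" using Tp by (simp add: divide_less_cancel)
    then have "N n \<le> C n" using comb by simp
    then have "real (N n) / T n \<le> real (C n) / T n" using Tp by (simp add: divide_right_mono)
    then show ?case using elim by simp
  qed
qed

lemma ae_lower:
  fixes T N C :: "'a \<Rightarrow> nat \<Rightarrow> nat" and s S :: "'a \<Rightarrow> nat \<Rightarrow> real"
  assumes T: "AE \<omega> in M. filterlim (T \<omega>) at_top sequentially"
    and r: "AE \<omega> in M. (\<lambda>n. s \<omega> n / real (T \<omega> n)) \<longlonglongrightarrow> \<rho>"
    and c: "AE \<omega> in M. P \<omega> \<longrightarrow> (\<lambda>n. real (C \<omega> n) / real (T \<omega> n)) \<longlonglongrightarrow> p"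
    and sm: "AE \<omega> in M. P \<omega> \<longrightarrow> (\<lambda>n. S \<omega> n / real (T \<omega> n)) \<longlonglongrightarrow> g"
    and P: "AE \<omega> in M. P \<omega>" and g: "g < \<rho>"
    and comb: "\<And>\<omega> n. P \<omega> \<Longrightarrow> T \<omega> n \<ge> 1 \<Longrightarrow> S \<omega> n \<le> s \<omega> n \<Longrightarrow> C \<omega> n \<le> N \<omega> n"
    and e: "\<epsilon> > 0"
  shows "AE \<omega> in M. eventually (\<lambda>n. p - \<epsilon> < real (N \<omega> n) / real (T \<omega> n)) sequentially"
  using T r c sm P
proof eventually_elim
  case (elim \<omega>)
  show ?case by (rule core_lower[where s="s \<omega>" and S="S \<omega>" and C="C \<omega>" and g=g and \<rho>=\<rho>])
     (use elim g e comb[of \<omega>] in auto)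
qed

lemma ae_upper:
  fixes T N C :: "'a \<Rightarrow> nat \<Rightarrow> nat" and s S :: "'a \<Rightarrow> nat \<Rightarrow> real"
  assumes T: "AE \<omega> in M. filterlim (T \<omega>) at_top sequentially"
    and r: "AE \<omega> in M. (\<lambda>n. s \<omega> n / real (T \<omega> n)) \<longlonglongrightarrow> \<rho>"
    and c: "AE \<omega> in M. P \<omega> \<longrightarrow> (\<lambda>n. real (C \<omega> n) / real (T \<omega> n)) \<longlonglongrightarrow> p"
    and sm: "AE \<omega> in M. P \<omega> \<longrightarrow> (\<lambda>n. S \<omega> n / real (T \<omega> n)) \<longlonglongrightarrow> g"
    and P: "AE \<omega> in M. P \<omega>" and g: "\<rho> < g"
    and comb: "\<And>\<omega> n. P \<omega> \<Longrightarrow> s \<omega> n < S \<omega> n \<Longrightarrow> N \<omega> n \<le> C \<omega> n"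
    and e: "\<epsilon> > 0"
  shows "AE \<omega> in M. eventually (\<lambda>n. real (N \<omega> n) / real (T \<omega> n) < p + \<epsilon>) sequentially"
  using T r c sm P
proof eventually_elim
  case (elim \<omega>)
  show ?case by (rule core_upper[where s="s \<omega>" and S="S \<omega>" and C="C \<omega>" and g=g and \<rho>=\<rho>])
     (use elim g e comb[of \<omega>] in auto)
qed

lemma weakest_le_t: "weakest_count t x s \<le> t"
proof -
  define K where "K = {k. 1 \<le> k \<and> k \<le> t \<and> (\<Sum>j=1..k. order_stats t x ! (j - 1)) \<le> s}"
  show ?thesis
  proof (cases "t = 0 \<or> order_stats t x ! 0 > s")
    case True then show ?thesis unfolding weakest_count_def by auto
  next
    case False
    then have "1 \<in> K" unfolding K_def by auto
    moreover have "finite K" unfolding K_def by simp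
    ultimately have "Max K \<in> K" using Max_in by blast
    then show ?thesis using False unfolding weakest_count_def K_def by auto
  qed
qed

lemma strongest_le_t: "strongest_count t x s \<le> t"
proof -
  define K where "K = {k. 1 \<le> k \<and> k \<le> t \<and> (\<Sum>j=t-k+1..t. order_stats t x ! (j - 1)) \<le> s}"
  show ?thesis
  proof (cases "t = 0 \<or> order_stats t x ! (t - 1) > s")
    case True then show ?thesis unfolding strongest_count_def by auto
  next
    case False
    then have "1 \<in> K" unfolding K_def by auto
    moreover have "finite K" unfolding K_def by simp
    ultimately have "Max K \<in> K" using Max_in by blast
    then show ?thesis using False unfolding strongest_count_def K_def by auto
  qed
qed

lemma ratio_le_1: "(n::nat) \<le> t \<Longrightarrow> real n / real t \<le> 1"
  by (cases "t = 0") (auto simp: divide_le_eq)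

definition Iint :: "real measure \<Rightarrow> real \<Rightarrow> real \<Rightarrow> real" where
  "Iint D c d = (\<integral>x. x * indicator {c<..d} x \<partial>D)"

lemma Iint_integrable:
  fixes D :: "real measure"
  assumes "integrable D (\<lambda>x. x)" "sets D = sets borel"
  shows "integrable D (\<lambda>x. x * indicator {c<..d} x)"
  using integrable_real_mult_indicator[of "{c<..d}" D "\<lambda>x::real. x"] assms by simp

lemma Iint_add:
  fixes D :: "real measure"
  assumes i: "integrable D (\<lambda>x. x)" and s: "sets D = sets borel" and cd: "c \<le> d" "d \<le> e"
  shows "Iint D c d + Iint D d e = Iint D c e"
proof -
  have "Iint D c d + Iint D d e = (\<integral>x. x * indicator {c<..d} x + x * indicator {d<..e} x \<partial>D)"
    unfolding Iint_def by (rule Bochner_Integration.integral_add[symmetric]) (rule Iint_integrable[OF i s])+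
  also have "\<dots> = Iint D c e" unfolding Iint_def
    by (rule Bochner_Integration.integral_cong) (use cd in \<open>auto simp: indicator_def\<close>)
  finally show ?thesis .
qed

lemma Iint_lower:
  fixes D :: "real measure"
  assumes i: "integrable D (\<lambda>x. x)" and s: "sets D = sets borel" and sp: "space D = UNIV"
    and fin: "finite_measure D" and c: "0 \<le> c"
  shows "c * measure D {c<..d} \<le> Iint D c d"
proof -
  interpret finite_measure D by (rule fin)
  have "c * measure D {c<..d} = (\<integral>x. c * indicator {c<..d} x \<partial>D)"
    using sp by simp
  also have "\<dots> \<le> Iint D c d" unfolding Iint_def
  proof (rule integral_mono)
    show "integrable D (\<lambda>x. c * indicator {c<..d} x)"
      using s by (intro integrable_mult_right integrable_real_indicator) (auto simp: less_top[symmetric])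
    show "integrable D (\<lambda>x. x * indicator {c<..d} x)" by (rule Iint_integrable[OF i s])
    show "c * indicator {c<..d} x \<le> x * indicator {c<..d} x" for x
      by (auto simp: indicator_def)
  qed
  finally show ?thesis .
qed


theorem mainTheorem12:
  fixes M :: "'a measure" and X :: "nat \<Rightarrow> 'a \<Rightarrow> real"
    and \<Phi> :: "nat \<Rightarrow> 'a \<Rightarrow> nat" and \<Psi> :: "nat \<Rightarrow> 'a \<Rightarrow> real"
    and F :: "real \<Rightarrow> real" and \<mu> \<rho> \<tau> :: real
  assumes P: "prob_space M"
    and X_rv: "\<And>i. i \<ge> 1 \<Longrightarrow> X i \<in> borel_measurable M"
    and X_indep: "prob_space.indep_vars M (\<lambda>_. borel) X {1..}"
    and X_ident: "\<And>i. i \<ge> 1 \<Longrightarrow> distr M borel (X i) = distr M borel (X 1)"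
    and X_nonneg: "\<And>i. i \<ge> 1 \<Longrightarrow> AE \<omega> in M. X i \<omega> \<ge> 0"
    and X_int: "integrable M (X 1)"
    and mu_def: "\<mu> = (\<integral>\<omega>. X 1 \<omega> \<partial>M)"
    and F_def: "F = cdf (distr M borel (X 1))"
    and F_cont: "continuous_on UNIV F"
    and Phi_rv: "\<And>n. \<Phi> n \<in> measurable M (count_space UNIV)"
    and Psi_rv: "\<And>n. \<Psi> n \<in> borel_measurable M"
    and Phi_inf: "AE \<omega> in M. filterlim (\<lambda>n. \<Phi> n \<omega>) at_top sequentially"
    and Psi_inf: "AE \<omega> in M. filterlim (\<lambda>n. \<Psi> n \<omega>) at_top sequentially"
    and ratio: "AE \<omega> in M. (\<lambda>n. \<Psi> n \<omega> / real (\<Phi> n \<omega>)) \<longlonglongrightarrow> \<rho>"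
    and rho_pos: "0 < \<rho>" and rho_le: "\<rho> \<le> \<mu>"
    and tau: "(LINT x:{0..\<tau>}|distr M borel (X 1). x) = \<rho>"
  shows "(AE \<omega> in M. (\<lambda>n. real (weakest_count (\<Phi> n \<omega>) (\<lambda>k. X k \<omega>) (\<Psi> n \<omega>))
                              / real (\<Phi> n \<omega>)) \<longlonglongrightarrow> F \<tau>)
       \<and> ((\<exists>B. \<forall>i\<ge>1. AE \<omega> in M. X i \<omega> \<le> B) \<longrightarrow>
           (\<forall>\<theta>. (LINT x:{\<theta>..Inf {y. F y = 1}}|distr M borel (X 1). x) = \<rho> \<longrightarrow>
              (AE \<omega> in M. (\<lambda>n. real (strongest_count (\<Phi> n \<omega>) (\<lambda>k. X k \<omega>) (\<Psi> n \<omega>))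
                              / real (\<Phi> n \<omega>)) \<longlonglongrightarrow> 1 - F \<theta>)))"
proof -
  interpret prob_space M by (rule P)
  have X1[measurable]: "X 1 \<in> borel_measurable M" using X_rv by simp
  define D where "D = distr M borel (X 1)"
  interpret D: real_distribution D unfolding D_def by (rule real_distribution_distr[OF X1])
  have spD: "space D = UNIV" unfolding D_def by simp
  have setsD: "sets D = sets borel" unfolding D_def by simp
  have FD: "F = cdf D" unfolding F_def D_def ..
  have finD: "finite_measure D" by (rule finite_measureI) (simp add: D.emeasure_space_1)
  have intD: "integrable D (\<lambda>x. x)" unfolding D_def using X_int by (subst integrable_distr_eq) auto
  have atom: "measure D {c} = 0" for c
    using D.isCont_cdf[of c] F_cont FD by (simp add: continuous_on_eq_continuous_at)
  have nulls: "{c} \<in> null_sets D" for c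
    by (rule null_setsI) (auto simp: D.emeasure_eq_measure atom setsD)
  have aeD: "AE x in D. 0 \<le> x"
    unfolding D_def using X_nonneg[of 1] X1 by (subst AE_distr_iff) auto
  have Fmono: "F x \<le> F y" if "x \<le> y" for x y unfolding FD by (rule D.cdf_nondecreasing[OF that])
  have Fnn: "0 \<le> F x" for x unfolding FD by (rule D.cdf_nonneg)
  have Fle1: "F x \<le> 1" for x unfolding FD by (rule D.cdf_bounded_prob)
  have Fcont: "continuous_on A F" for A using F_cont by (rule continuous_on_subset) auto
  have Fdiff: "measure D {c<..d} = F d - F c" if "c \<le> d" for c d
    unfolding FD using that by (cases "c < d") (auto simp: D.cdf_diff_eq)
  have F0: "F 0 = 0"
  proof -
    have "AE x in D. x \<notin> {..<0::real}" using aeD by eventually_elim auto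
    then have nul1: "{..<0::real} \<in> null_sets D" using AE_iff_null_sets[of "{..<0::real}" D] setsD by simp
    have e: "{..0::real} = {..<0} \<union> {0}" by auto
    have "F 0 = measure D ({..<0} \<union> {0})" unfolding FD cdf_def e ..
    also have "\<dots> = measure D {..<0}" by (rule measure_Un_null_set) (auto simp: setsD nulls)
    also have "\<dots> = 0" using nul1 by (rule measure_eq_0_null_sets)
    finally show ?thesis .
  qed
  have Ilow: "c * (F d - F c) \<le> Iint D c d" if "0 \<le> c" "c \<le> d" for c d
    using Iint_lower[OF intD setsD spD finD that(1), of d] Fdiff[OF that(2)] by simp
  have Iadd: "Iint D c d + Iint D d e = Iint D c e" if "c \<le> d" "d \<le> e" for c d e
    by (rule Iint_add[OF intD setsD that])
  have mD: "f \<in> borel_measurable D" if "f \<in> borel_measurable borel" for f :: "real \<Rightarrow> real"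
    using that by (simp add: measurable_cong_sets[OF setsD refl])
  have ae_nn: "AE \<omega> in M. \<forall>k\<ge>1. 0 \<le> X k \<omega>"
  proof -
    have "AE \<omega> in M. 1 \<le> k \<longrightarrow> 0 \<le> X k \<omega>" for k by (cases "1 \<le> k") (simp_all add: X_nonneg)
    then show ?thesis by (subst AE_all_countable) auto
  qed
  have slln_Phi: "AE \<omega> in M. (\<lambda>n. (\<Sum>k=1..\<Phi> n \<omega>. g (X k \<omega>)) / real (\<Phi> n \<omega>)) \<longlonglongrightarrow> (\<integral>x. g x \<partial>D)"
    if "g \<in> borel_measurable borel" "\<And>x. g x \<in> {lo..hi}" "lo < hi" for g :: "real \<Rightarrow> real" and lo hi
  proof -
    have "AE \<omega> in M. (\<lambda>t. (\<Sum>k=1..t. g (X k \<omega>)) / real t) \<longlonglongrightarrow> (\<integral>x. g x \<partial>D)"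
      unfolding D_def by (rule slln_bounded[OF P X_indep X_ident that])
    then show ?thesis using Phi_inf
    proof eventually_elim
      case (elim \<omega>)
      show ?case using filterlim_compose[OF elim] by simp
    qed
  qed
  define T where "T = (\<lambda>\<omega> n. \<Phi> n \<omega>)"
  define sv where "sv = (\<lambda>\<omega> n. \<Psi> n \<omega>)"
  have T_inf: "AE \<omega> in M. filterlim (T \<omega>) at_top sequentially" unfolding T_def using Phi_inf by simp
  have sv_lim: "AE \<omega> in M. (\<lambda>n. sv \<omega> n / real (T \<omega> n)) \<longlonglongrightarrow> \<rho>" unfolding T_def sv_def using ratio by simp
  have ratio_nn: "0 \<le> real a / real (T \<omega> n)" for a \<omega> n by simp
  have ratio_1: "real a / real (T \<omega> n) \<le> 1" if "a \<le> T \<omega> n" for a \<omega> n using ratio_le_1[OF that] .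
  have combine: "AE \<omega> in M. R \<omega> \<longlonglongrightarrow> L"
    if lo: "\<And>m::nat. AE \<omega> in M. eventually (\<lambda>n. L - 1 / real (Suc m) < R \<omega> n) sequentially"
    and up: "\<And>m::nat. AE \<omega> in M. eventually (\<lambda>n. R \<omega> n < L + 1 / real (Suc m)) sequentially"
    for R :: "'a \<Rightarrow> nat \<Rightarrow> real" and L
  proof -
    have "AE \<omega> in M. \<forall>m::nat. eventually (\<lambda>n. L - 1 / real (Suc m) < R \<omega> n) sequentially \<and>
                eventually (\<lambda>n. R \<omega> n < L + 1 / real (Suc m)) sequentially"
      using lo up by (subst AE_all_countable) (auto intro: eventually_conj)
    then show ?thesis
    proof eventually_elim
      case (elim \<omega>)
      show ?case
      proof (rule tendsto_from_inv)
        fix m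
        have "eventually (\<lambda>n. L - 1 / real (Suc m) < R \<omega> n \<and> R \<omega> n < L + 1 / real (Suc m)) sequentially"
          using elim[rule_format, of m] by (auto intro: eventually_conj)
        then show "eventually (\<lambda>n. \<bar>R \<omega> n - L\<bar> < 1 / real (Suc m)) sequentially"
          by (rule eventually_mono) auto
      qed
    qed
  qed
  show ?thesis
  proof (intro conjI impI allI)
    have tau_pos: "0 < \<tau>"
    proof (rule ccontr)
      assume "\<not> 0 < \<tau>"
      then have z: "(\<lambda>x. indicator {0..\<tau>} x *\<^sub>R x) = (\<lambda>x. 0::real)" by (intro ext) (auto simp: indicator_def)
      have "(LINT x:{0..\<tau>}|D. x) = 0" unfolding set_lebesgue_integral_def z by simp
      then show False using tau rho_pos unfolding D_def by simp
    qed
    have rho_tau: "Iint D 0 \<tau> = \<rho>"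
    proof -
      have "(LINT x:{0..\<tau>}|D. x) = Iint D 0 \<tau>" unfolding set_lebesgue_integral_def Iint_def
        by (rule Bochner_Integration.integral_cong) (auto simp: indicator_def)
      then show ?thesis using tau unfolding D_def by simp
    qed
    define cntL where "cntL = (\<lambda>c \<omega> n. length (filter (\<lambda>v. v \<le> c) (map (\<lambda>k. X k \<omega>) [1..<Suc (\<Phi> n \<omega>)])))"
    define sumL where "sumL = (\<lambda>c \<omega> n. sum_list (filter (\<lambda>v. v \<le> c) (map (\<lambda>k. X k \<omega>) [1..<Suc (\<Phi> n \<omega>)])))"
    define NW where "NW = (\<lambda>\<omega> n. weakest_count (\<Phi> n \<omega>) (\<lambda>k. X k \<omega>) (\<Psi> n \<omega>))"
    define P where "P = (\<lambda>\<omega>. \<forall>k\<ge>1. 0 \<le> X k \<omega>)"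
    have P_ae: "AE \<omega> in M. P \<omega>" unfolding P_def by (rule ae_nn)
    have cntL_lim: "AE \<omega> in M. P \<omega> \<longrightarrow> (\<lambda>n. real (cntL c \<omega> n) / real (T \<omega> n)) \<longlonglongrightarrow> F c" for c
    proof -
      have gm: "(indicator {..c} :: real \<Rightarrow> real) \<in> borel_measurable borel" by measurable
      have gb: "\<And>x. (indicator {..c} x :: real) \<in> {0..1}" "(0::real) < 1" by (auto simp: indicator_def)
      have "AE \<omega> in M. (\<lambda>n. (\<Sum>k=1..\<Phi> n \<omega>. indicator {..c} (X k \<omega>)) / real (\<Phi> n \<omega>)) \<longlonglongrightarrow> (\<integral>x. indicator {..c} x \<partial>D)"
        using slln_Phi[OF gm gb] by simp
      moreover have "(\<integral>x. indicator {..c} x \<partial>D) = F c" unfolding FD cdf_def by (simp add: spD)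
      moreover have "real (cntL c \<omega> n) = (\<Sum>k=1..\<Phi> n \<omega>. indicator {..c} (X k \<omega>))" for \<omega> n
        unfolding cntL_def filter_len_eq by (rule sum.cong) (auto simp: indicator_def)
      ultimately show ?thesis by (simp add: T_def) (auto elim!: eventually_mono)
    qed
    have sumL_lim: "AE \<omega> in M. P \<omega> \<longrightarrow> (\<lambda>n. sumL c \<omega> n / real (T \<omega> n)) \<longlonglongrightarrow> Iint D 0 c" for c
    proof -
      have gm: "(\<lambda>x::real. x * indicator {0<..c} x) \<in> borel_measurable borel" by measurable
      have gb: "\<And>x::real. x * indicator {0<..c} x \<in> {0..\<bar>c\<bar> + 1}" "(0::real) < \<bar>c\<bar> + 1" by (auto simp: indicator_def)
      have "AE \<omega> in M. (\<lambda>n. (\<Sum>k=1..\<Phi> n \<omega>. X k \<omega> * indicator {0<..c} (X k \<omega>)) / real (\<Phi> n \<omega>)) \<longlonglongrightarrow> (\<integral>x. x * indicator {0<..c} x \<partial>D)"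
        using slln_Phi[OF gm gb] by simp
      then show ?thesis
      proof eventually_elim
        case (elim \<omega>)
        show ?case
        proof
          assume nn: "P \<omega>"
          have "sumL c \<omega> n = (\<Sum>k=1..\<Phi> n \<omega>. X k \<omega> * indicator {0<..c} (X k \<omega>))" for n
            unfolding sumL_def filter_sum_eq
            by (rule sum.cong) (use nn in \<open>auto simp: indicator_def P_def\<close>)
          then show "(\<lambda>n. sumL c \<omega> n / real (T \<omega> n)) \<longlonglongrightarrow> Iint D 0 c" using elim by (simp add: T_def Iint_def)
        qed
      qed
    qed
    have lowW: "AE \<omega> in M. eventually (\<lambda>n. F \<tau> - 1 / real (Suc m) < real (NW \<omega> n) / real (T \<omega> n)) sequentially" for m
    proof (cases "F \<tau> < 1 / real (Suc m)")
      case True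
      have "F \<tau> - 1 / real (Suc m) < real (NW \<omega> n) / real (T \<omega> n)" for \<omega> n
        using True ratio_nn[of "NW \<omega> n" \<omega> n] by linarith
      then show ?thesis by (auto intro: AE_I2 always_eventually)
    next
      case False
      define \<delta> where "\<delta> = 1 / (2 * real (Suc m))"
      have sm0: "real (Suc m) > 0" by simp
      have \<delta>: "\<delta> > 0" "2 * \<delta> = 1 / real (Suc m)" unfolding \<delta>_def using sm0 by (auto simp: field_simps)
      have y: "F 0 \<le> F \<tau> - \<delta>" "F \<tau> - \<delta> \<le> F \<tau>" using False \<delta> F0 by auto
      obtain c where c: "0 \<le> c" "c \<le> \<tau>" "F c = F \<tau> - \<delta>"
        using IVT'[of F 0 "F \<tau> - \<delta>" \<tau>, OF y(1) y(2) _ Fcont] tau_pos by auto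
      have cpos: "0 < c"
      proof (rule ccontr)
        assume "\<not> 0 < c" then have "c = 0" using c by simp
        then show False using c(3) F0 False \<delta> by simp
      qed
      have "c * (F \<tau> - F c) \<le> Iint D c \<tau>" using Ilow[of c \<tau>] cpos c by linarith
      moreover have "c * (F \<tau> - F c) > 0" using cpos c \<delta> by simp
      moreover have "Iint D 0 c + Iint D c \<tau> = \<rho>" using Iadd[of 0 c \<tau>] c rho_tau by simp
      ultimately have gl: "Iint D 0 c < \<rho>" by linarith
      have comb: "cntL c \<omega> n \<le> NW \<omega> n"
        if "P \<omega>" "T \<omega> n \<ge> 1" "sumL c \<omega> n \<le> sv \<omega> n" for \<omega> n
      proof -
        have nn: "\<forall>k\<in>{1..\<Phi> n \<omega>}. 0 \<le> X k \<omega>" using that(1) unfolding P_def by simp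
        have t1: "1 \<le> \<Phi> n \<omega>" using that(2) unfolding T_def by simp
        have S: "sum_list (filter (\<lambda>v. v \<le> c) (map (\<lambda>k. X k \<omega>) [1..<Suc (\<Phi> n \<omega>)])) \<le> \<Psi> n \<omega>"
          using that(3) unfolding sumL_def sv_def by simp
        show ?thesis using weakest_ge[OF t1 nn S] unfolding cntL_def NW_def by simp
      qed
      have "AE \<omega> in M. eventually (\<lambda>n. F c - \<delta> < real (NW \<omega> n) / real (T \<omega> n)) sequentially"
        by (rule ae_lower[OF T_inf sv_lim cntL_lim sumL_lim P_ae gl comb \<delta>(1)])
      moreover have "F c - \<delta> = F \<tau> - 1 / real (Suc m)" using c \<delta> by simp
      ultimately show ?thesis by simp
    qed
    have upW: "AE \<omega> in M. eventually (\<lambda>n. real (NW \<omega> n) / real (T \<omega> n) < F \<tau> + 1 / real (Suc m)) sequentially" for m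
    proof (cases "1 < F \<tau> + 1 / real (Suc m)")
      case True
      have "real (NW \<omega> n) / real (T \<omega> n) < F \<tau> + 1 / real (Suc m)" for \<omega> n
        using True ratio_1[of "NW \<omega> n" \<omega> n] weakest_le_t unfolding NW_def T_def by fastforce
      then show ?thesis by (auto intro: AE_I2 always_eventually)
    next
      case False
      define \<delta> where "\<delta> = 1 / (2 * real (Suc m))"
      have sm0: "real (Suc m) > 0" by simp
      have \<delta>: "\<delta> > 0" "2 * \<delta> = 1 / real (Suc m)" unfolding \<delta>_def using sm0 by (auto simp: field_simps)
      have "eventually (\<lambda>x. F \<tau> + \<delta> < F x) at_top"
        using order_tendstoD(1)[OF D.cdf_lim_at_top_prob, of "F \<tau> + \<delta>"] False \<delta> FD by simp
      then obtain K where K: "F \<tau> + \<delta> < F K" unfolding eventually_at_top_linorder by auto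
      have tK: "\<tau> \<le> K"
      proof (rule ccontr)
        assume "\<not> \<tau> \<le> K" then have "F K \<le> F \<tau>" using Fmono by simp
        then show False using K \<delta> by simp
      qed
      obtain c where c: "\<tau> \<le> c" "c \<le> K" "F c = F \<tau> + \<delta>"
        using IVT'[of F \<tau> "F \<tau> + \<delta>" K, OF _ _ tK Fcont] K \<delta> by auto
      have "\<tau> * (F c - F \<tau>) \<le> Iint D \<tau> c" using Ilow[of \<tau> c] tau_pos c by linarith
      moreover have "\<tau> * (F c - F \<tau>) > 0" using tau_pos c \<delta> by simp
      moreover have "Iint D 0 \<tau> + Iint D \<tau> c = Iint D 0 c" using Iadd[of 0 \<tau> c] c tau_pos by simp
      ultimately have gl: "\<rho> < Iint D 0 c" using rho_tau by linarith
      have comb: "NW \<omega> n \<le> cntL c \<omega> n"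
        if "P \<omega>" "sv \<omega> n < sumL c \<omega> n" for \<omega> n
      proof -
        have nn: "\<forall>k\<in>{1..\<Phi> n \<omega>}. 0 \<le> X k \<omega>" using that(1) unfolding P_def by simp
        have S: "\<Psi> n \<omega> < sum_list (filter (\<lambda>v. v \<le> c) (map (\<lambda>k. X k \<omega>) [1..<Suc (\<Phi> n \<omega>)]))"
          using that(2) unfolding sumL_def sv_def by simp
        show ?thesis using weakest_le[OF nn S] unfolding cntL_def NW_def by simp
      qed
      have "AE \<omega> in M. eventually (\<lambda>n. real (NW \<omega> n) / real (T \<omega> n) < F c + \<delta>) sequentially"
        by (rule ae_upper[OF T_inf sv_lim cntL_lim sumL_lim P_ae gl comb \<delta>(1)])
      moreover have "F c + \<delta> = F \<tau> + 1 / real (Suc m)" using c \<delta> by simp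
      ultimately show ?thesis by simp
    qed
    have "AE \<omega> in M. (\<lambda>n. real (NW \<omega> n) / real (T \<omega> n)) \<longlonglongrightarrow> F \<tau>"
      by (rule combine[OF lowW upW])
    then show "AE \<omega> in M. (\<lambda>n. real (weakest_count (\<Phi> n \<omega>) (\<lambda>k. X k \<omega>) (\<Psi> n \<omega>)) / real (\<Phi> n \<omega>)) \<longlonglongrightarrow> F \<tau>"
      unfolding NW_def T_def by simp
  next
    fix \<theta>
    assume "\<exists>B. \<forall>i\<ge>1. AE \<omega> in M. X i \<omega> \<le> B"
    then obtain B where Bb: "\<forall>i\<ge>1. AE \<omega> in M. X i \<omega> \<le> B" by blast
    assume th: "(LINT x:{\<theta>..Inf {y. F y = 1}}|distr M borel (X 1). x) = \<rho>"
    define b where "b = Inf {y. F y = 1}"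
    have aeB: "AE x in D. x \<le> B" unfolding D_def using Bb X1 by (subst AE_distr_iff) auto
    have FB: "F B = 1"
    proof -
      have "AE x in D. x \<notin> {B<..}" using aeB by eventually_elim auto
      then have nul: "{B<..} \<in> null_sets D" using AE_iff_null_sets[of "{B<..}" D] setsD by simp
      have e: "{..B} = UNIV - {B<..}" by auto
      have "F B = measure D (UNIV - {B<..})" unfolding FD cdf_def e ..
      also have "\<dots> = measure D UNIV" by (rule measure_Diff_null_set) (auto simp: setsD nul)
      also have "\<dots> = 1" using D.prob_space spD by simp
      finally show ?thesis .
    qed
    have ge0: "0 \<le> y" if "F y = 1" for y
    proof (rule ccontr)
      assume "\<not> 0 \<le> y" then have "F y \<le> F 0" using Fmono by simp
      then show False using F0 that by simp
    qed
    have bdd: "bdd_below {y. F y = 1}" by (rule bdd_belowI[of _ 0]) (use ge0 in auto)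
    have closedS: "closed {y. F y = 1}" using closed_Collect_eq[OF F_cont continuous_on_const] .
    have binS: "b \<in> {y. F y = 1}" unfolding b_def by (rule closed_contains_Inf) (use FB bdd closedS in auto)
    then have Fb: "F b = 1" by simp
    have bpos: "0 < b"
    proof -
      have "0 \<le> b" using ge0 Fb by simp
      moreover have "b \<noteq> 0" using Fb F0 by auto
      ultimately show ?thesis by simp
    qed
    have aeb: "AE x in D. x \<le> b"
    proof -
      have e: "{b<..} = UNIV - {..b}" by auto
      have "measure D {b<..} = measure D UNIV - measure D {..b}"
        unfolding e using D.finite_measure_compl[of "{..b}"] spD setsD by simp
      also have "\<dots> = 0" using Fb D.prob_space spD unfolding FD cdf_def by simp
      finally have m0: "measure D {b<..} = 0" .
      have "{b<..} \<in> null_sets D"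
        by (rule null_setsI) (auto simp: D.emeasure_eq_measure m0 setsD)
      then have "AE x in D. x \<notin> {b<..}" using AE_iff_null_sets[of "{b<..}" D] setsD by simp
      then show ?thesis by eventually_elim auto
    qed
    define Q where "Q = (\<lambda>\<omega>. \<forall>k\<ge>1. 0 \<le> X k \<omega> \<and> X k \<omega> \<le> b)"
    have Q_ae: "AE \<omega> in M. Q \<omega>"
    proof -
      have "AE \<omega> in M. 1 \<le> k \<longrightarrow> 0 \<le> X k \<omega> \<and> X k \<omega> \<le> b" for k
      proof (cases "1 \<le> k")
        case True
        have rv: "X k \<in> borel_measurable M" using X_rv True by simp
        have "AE x in distr M borel (X k). x \<le> b" using aeb unfolding X_ident[OF True] D_def .
        then have "AE \<omega> in M. X k \<omega> \<le> b" using rv by (subst (asm) AE_distr_iff) auto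
        then show ?thesis using X_nonneg[OF True] True by eventually_elim auto
      qed simp
      then show ?thesis unfolding Q_def by (subst AE_all_countable) auto
    qed
    have thb: "\<theta> \<le> b"
    proof (rule ccontr)
      assume "\<not> \<theta> \<le> b"
      then have z: "(\<lambda>x. indicator {\<theta>..b} x *\<^sub>R x) = (\<lambda>x. 0::real)" by (intro ext) (auto simp: indicator_def)
      have "(LINT x:{\<theta>..b}|D. x) = 0" unfolding set_lebesgue_integral_def z by simp
      then show False using th rho_pos unfolding D_def b_def by simp
    qed
    define a where "a = max \<theta> 0"
    have a: "0 \<le> a" "a \<le> b" "\<theta> \<le> a" using thb bpos unfolding a_def by auto
    have Fa: "F a = F \<theta>"
    proof (cases "\<theta> \<le> 0")
      case True
      then have "F \<theta> \<le> F 0" using Fmono by simp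
      then show ?thesis using True F0 Fnn[of \<theta>] unfolding a_def by simp
    qed (simp add: a_def)
    have rho_a: "Iint D a b = \<rho>"
    proof -
      have "AE x in D. x \<notin> {\<theta>}" using AE_iff_null_sets[of "{\<theta>}" D] nulls setsD by simp
      then have ae2: "AE x in D. indicator {\<theta>..b} x *\<^sub>R x = x * indicator {a<..b} x" using aeD
        by eventually_elim (auto simp: indicator_def a_def)
      have "(LINT x:{\<theta>..b}|D. x) = Iint D a b" unfolding set_lebesgue_integral_def Iint_def
        by (rule integral_cong_AE[OF _ _ ae2]) (auto intro!: mD)
      then show ?thesis using th unfolding D_def b_def by simp
    qed
    define cntU where "cntU = (\<lambda>c \<omega> n. length (filter (\<lambda>v. c < v) (map (\<lambda>k. X k \<omega>) [1..<Suc (\<Phi> n \<omega>)])))"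
    define sumU where "sumU = (\<lambda>c \<omega> n. sum_list (filter (\<lambda>v. c < v) (map (\<lambda>k. X k \<omega>) [1..<Suc (\<Phi> n \<omega>)])))"
    define NS where "NS = (\<lambda>\<omega> n. strongest_count (\<Phi> n \<omega>) (\<lambda>k. X k \<omega>) (\<Psi> n \<omega>))"
    have cntU_lim: "AE \<omega> in M. Q \<omega> \<longrightarrow> (\<lambda>n. real (cntU c \<omega> n) / real (T \<omega> n)) \<longlonglongrightarrow> 1 - F c"
      if cb: "c \<le> b" for c
    proof -
      have gm: "(indicator {c<..b} :: real \<Rightarrow> real) \<in> borel_measurable borel" by measurable
      have gb: "\<And>x. (indicator {c<..b} x :: real) \<in> {0..1}" "(0::real) < 1" by (auto simp: indicator_def)
      have "AE \<omega> in M. (\<lambda>n. (\<Sum>k=1..\<Phi> n \<omega>. indicator {c<..b} (X k \<omega>)) / real (\<Phi> n \<omega>)) \<longlonglongrightarrow> (\<integral>x. indicator {c<..b} x \<partial>D)"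
        using slln_Phi[OF gm gb] by simp
      moreover have "(\<integral>x. indicator {c<..b} x \<partial>D) = 1 - F c" using Fdiff[OF cb] Fb by (simp add: spD)
      ultimately show ?thesis
      proof (elim AE_mp, intro AE_I2 impI)
        fix \<omega> assume lim: "(\<lambda>n. (\<Sum>k=1..\<Phi> n \<omega>. indicator {c<..b} (X k \<omega>)) / real (\<Phi> n \<omega>)) \<longlonglongrightarrow> (\<integral>x. indicator {c<..b} x \<partial>D)"
          and eq: "(\<integral>x. indicator {c<..b} x \<partial>D) = 1 - F c" and q: "Q \<omega>"
        have "real (cntU c \<omega> n) = (\<Sum>k=1..\<Phi> n \<omega>. indicator {c<..b} (X k \<omega>))" for n
          unfolding cntU_def filter_len_eq by (rule sum.cong) (use q in \<open>auto simp: indicator_def Q_def\<close>)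
        then show "(\<lambda>n. real (cntU c \<omega> n) / real (T \<omega> n)) \<longlonglongrightarrow> 1 - F c" using lim eq by (simp add: T_def)
      qed
    qed
    have sumU_lim: "AE \<omega> in M. Q \<omega> \<longrightarrow> (\<lambda>n. sumU c \<omega> n / real (T \<omega> n)) \<longlonglongrightarrow> Iint D c b" for c
    proof -
      have gm: "(\<lambda>x::real. x * indicator {c<..b} x) \<in> borel_measurable borel" by measurable
      have gb: "\<And>x::real. x * indicator {c<..b} x \<in> {min c 0 - 1..max b 0 + 1}" "min c 0 - 1 < max b 0 + (1::real)"
        by (auto simp: indicator_def min_def max_def)
      have "AE \<omega> in M. (\<lambda>n. (\<Sum>k=1..\<Phi> n \<omega>. X k \<omega> * indicator {c<..b} (X k \<omega>)) / real (\<Phi> n \<omega>)) \<longlonglongrightarrow> (\<integral>x. x * indicator {c<..b} x \<partial>D)"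
        using slln_Phi[OF gm gb] by simp
      then show ?thesis
      proof eventually_elim
        case (elim \<omega>)
        show ?case
        proof
          assume q: "Q \<omega>"
          have "sumU c \<omega> n = (\<Sum>k=1..\<Phi> n \<omega>. X k \<omega> * indicator {c<..b} (X k \<omega>))" for n
            unfolding sumU_def filter_sum_eq
            by (rule sum.cong) (use q in \<open>auto simp: indicator_def Q_def\<close>)
          then show "(\<lambda>n. sumU c \<omega> n / real (T \<omega> n)) \<longlonglongrightarrow> Iint D c b" using elim by (simp add: T_def Iint_def)
        qed
      qed
    qed
    have lowS: "AE \<omega> in M. eventually (\<lambda>n. (1 - F \<theta>) - 1 / real (Suc m) < real (NS \<omega> n) / real (T \<omega> n)) sequentially" for m
    proof (cases "1 - F \<theta> < 1 / real (Suc m)")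
      case True
      have "(1 - F \<theta>) - 1 / real (Suc m) < real (NS \<omega> n) / real (T \<omega> n)" for \<omega> n
        using True ratio_nn[of "NS \<omega> n" \<omega> n] by linarith
      then show ?thesis by (auto intro: AE_I2 always_eventually)
    next
      case False
      define \<delta> where "\<delta> = 1 / (2 * real (Suc m))"
      have sm0: "real (Suc m) > 0" by simp
      have \<delta>: "\<delta> > 0" "2 * \<delta> = 1 / real (Suc m)" unfolding \<delta>_def using sm0 by (auto simp: field_simps)
      have y: "F a \<le> F a + \<delta>" "F a + \<delta> \<le> F b" using False \<delta> Fa Fb by auto
      obtain c where c: "a \<le> c" "c \<le> b" "F c = F a + \<delta>"
        using IVT'[of F a "F a + \<delta>" b, OF y(1) y(2) a(2) Fcont] by auto
      have y2: "F a \<le> F a + \<delta> / 2" "F a + \<delta> / 2 \<le> F c" using \<delta> c by auto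
      obtain a' where a': "a \<le> a'" "a' \<le> c" "F a' = F a + \<delta> / 2"
        using IVT'[of F a "F a + \<delta> / 2" c, OF y2(1) y2(2) c(1) Fcont] by auto
      have a'pos: "0 < a'"
      proof -
        have "a' \<noteq> a" using a' \<delta> by auto
        then show ?thesis using a' a by simp
      qed
      have "a * (F a' - F a) \<le> Iint D a a'" using Ilow[of a a'] a a' by linarith
      moreover have "a * (F a' - F a) \<ge> 0" using a a' \<delta> by simp
      moreover have "a' * (F c - F a') \<le> Iint D a' c" using Ilow[of a' c] a'pos a' by linarith
      moreover have "a' * (F c - F a') > 0" using a'pos a' c \<delta> by simp
      moreover have "Iint D a a' + Iint D a' c = Iint D a c" using Iadd[of a a' c] a' by linarith
      moreover have "Iint D a c + Iint D c b = Iint D a b" using Iadd[of a c b] c by linarith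
      ultimately have gl: "Iint D c b < \<rho>" using rho_a by linarith
      have comb: "cntU c \<omega> n \<le> NS \<omega> n"
        if "Q \<omega>" "T \<omega> n \<ge> 1" "sumU c \<omega> n \<le> sv \<omega> n" for \<omega> n
      proof -
        have nn: "\<forall>k\<in>{1..\<Phi> n \<omega>}. 0 \<le> X k \<omega>" using that(1) unfolding Q_def by simp
        have t1: "1 \<le> \<Phi> n \<omega>" using that(2) unfolding T_def by simp
        have S: "sum_list (filter (\<lambda>v. c < v) (map (\<lambda>k. X k \<omega>) [1..<Suc (\<Phi> n \<omega>)])) \<le> \<Psi> n \<omega>"
          using that(3) unfolding sumU_def sv_def by simp
        show ?thesis using strongest_ge[OF t1 nn S] unfolding cntU_def NS_def by simp
      qed
      have "AE \<omega> in M. eventually (\<lambda>n. (1 - F c) - \<delta> < real (NS \<omega> n) / real (T \<omega> n)) sequentially"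
        by (rule ae_lower[OF T_inf sv_lim cntU_lim[OF c(2)] sumU_lim Q_ae gl comb \<delta>(1)])
      moreover have "(1 - F c) - \<delta> = (1 - F \<theta>) - 1 / real (Suc m)" using c \<delta> Fa by simp
      ultimately show ?thesis by simp
    qed
    have upS: "AE \<omega> in M. eventually (\<lambda>n. real (NS \<omega> n) / real (T \<omega> n) < (1 - F \<theta>) + 1 / real (Suc m)) sequentially" for m
    proof (cases "F \<theta> < 1 / real (Suc m)")
      case True
      have "real (NS \<omega> n) / real (T \<omega> n) < (1 - F \<theta>) + 1 / real (Suc m)" for \<omega> n
        using True ratio_1[of "NS \<omega> n" \<omega> n] strongest_le_t unfolding NS_def T_def by fastforce
      then show ?thesis by (auto intro: AE_I2 always_eventually)
    next
      case False
      define \<delta> where "\<delta> = 1 / (2 * real (Suc m))"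
      have sm0: "real (Suc m) > 0" by simp
      have \<delta>: "\<delta> > 0" "2 * \<delta> = 1 / real (Suc m)" unfolding \<delta>_def using sm0 by (auto simp: field_simps)
      have y: "F 0 \<le> F a - \<delta>" "F a - \<delta> \<le> F a" using False \<delta> Fa F0 by auto
      obtain c where c: "0 \<le> c" "c \<le> a" "F c = F a - \<delta>"
        using IVT'[of F 0 "F a - \<delta>" a, OF y(1) y(2) a(1) Fcont] by auto
      have cpos: "0 < c"
      proof (rule ccontr)
        assume "\<not> 0 < c" then have "c = 0" using c by simp
        then show False using c(3) F0 False \<delta> Fa by simp
      qed
      have "c * (F a - F c) \<le> Iint D c a" using Ilow[of c a] cpos c by linarith
      moreover have "c * (F a - F c) > 0" using cpos c \<delta> by simp
      moreover have "Iint D c a + Iint D a b = Iint D c b" using Iadd[of c a b] c a by linarith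
      ultimately have gl: "\<rho> < Iint D c b" using rho_a by linarith
      have comb: "NS \<omega> n \<le> cntU c \<omega> n"
        if "Q \<omega>" "sv \<omega> n < sumU c \<omega> n" for \<omega> n
      proof -
        have nn: "\<forall>k\<in>{1..\<Phi> n \<omega>}. 0 \<le> X k \<omega>" using that(1) unfolding Q_def by simp
        have S: "\<Psi> n \<omega> < sum_list (filter (\<lambda>v. c < v) (map (\<lambda>k. X k \<omega>) [1..<Suc (\<Phi> n \<omega>)]))"
          using that(2) unfolding sumU_def sv_def by simp
        show ?thesis using strongest_le[OF nn S] unfolding cntU_def NS_def by simp
      qed
      have cb: "c \<le> b" using c a by simp
      have "AE \<omega> in M. eventually (\<lambda>n. real (NS \<omega> n) / real (T \<omega> n) < (1 - F c) + \<delta>) sequentially"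
        by (rule ae_upper[OF T_inf sv_lim cntU_lim[OF cb] sumU_lim Q_ae gl comb \<delta>(1)])
      moreover have "(1 - F c) + \<delta> = (1 - F \<theta>) + 1 / real (Suc m)" using c \<delta> Fa by simp
      ultimately show ?thesis by simp
    qed
    have "AE \<omega> in M. (\<lambda>n. real (NS \<omega> n) / real (T \<omega> n)) \<longlonglongrightarrow> 1 - F \<theta>"
      by (rule combine[OF lowS upS])
    then show "AE \<omega> in M. (\<lambda>n. real (strongest_count (\<Phi> n \<omega>) (\<lambda>k. X k \<omega>) (\<Psi> n \<omega>)) / real (\<Phi> n \<omega>)) \<longlonglongrightarrow> 1 - F \<theta>"
      unfolding NS_def T_def by simp
  qed
qed

end
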